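(* $E_{range}<^{\mathrm{fin}}_{\mathrm{Learn}}E_0$: every finite $E_{range}$-learnable family of structures is $E_0$-learnable, and there is a finite family (namely $\{\omega,\omega^*\}$) that is $E_0$-learnable but not $E_{range}$-learnable.
   Context: All structures are countable, have domain $\mathbb{N}$, are in a finite relational signature, and are identified with their atomic diagrams (elements of $2^{\mathbb{N}}$). A family of structures is a countable set of pairwise nonisomorphic such structures. $\mathrm{LD}(\mathfrak{K})\subseteq 2^{\mathbb{N}}$ is the set of structures with domain $\mathbb{N}$ isomorphic to a member of $\mathfrak{K}$ (subspace topology). For an equivalence relation $E$ on a space $X$, $\mathfrak{K}$ is $E$-learnable if there is a continuous $\Gamma:\mathrm{LD}(\mathfrak{K})\to X$ with $\mathcal{S}\cong\mathcal{S}'\iff\Gamma(\mathcal{S})\,E\,\Gamma(\mathcal{S}')$ for all $\mathcal{S},\mathcal{S}'\in\mathrm{LD}(\mathfrak{K})$. On Baire space $\mathbb{N}^{\mathbb{N}}$: $p\,E_0\,q\iff\exists m\,\forall n\ge m\ p(n)=q(n)$; $p\,E_{range}\,q\iff\{p(m):m\}=\{q(m):m\}$. $\omega$ and $\omega^*$ are the linear orders of the natural numbers and of the negative integers. For criteria $X,Y$: $X\leq^{\mathrm{fin}}_{\mathrm{Learn}}Y$ means every finite $X$-learnable family is $Y$-learnable, and $<^{\mathrm{fin}}_{\mathrm{Learn}}$ means $\leq^{\mathrm{fin}}_{\mathrm{Learn}}$ but not the converse. *)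

theory Defs
  imports "HOL-Analysis.Analysis"
begin

text \<open>A finite relational signature is a list of arities: relation symbol i (for i below
  the length of the list) has arity sig ! i.  A structure with domain the natural numbers
  is identified with its atomic diagram, an element of the Cantor space
  (nat \<times> nat list) \<Rightarrow> bool (a countable product of copies of the discrete space bool,
  i.e. homeomorphic to Cantor space): D (i, xs) says that relation i holds of the tuple xs.  Equality atoms are omitted since
  they are the same for all structures with domain nat.\<close>

type_synonym diagram = "nat \<times> nat list \<Rightarrow> bool"

definition is_structure :: "nat list \<Rightarrow> diagram \<Rightarrow> bool" where
  "is_structure sig D \<longleftrightarrow>
     (\<forall>i xs. D (i, xs) \<longrightarrow> i < length sig \<and> length xs = sig ! i)"

definition iso :: "diagram \<Rightarrow> diagram \<Rightarrow> bool" where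
  "iso D D' \<longleftrightarrow> (\<exists>f :: nat \<Rightarrow> nat. bij f \<and> (\<forall>i xs. D (i, xs) = D' (i, map f xs)))"

definition family :: "nat list \<Rightarrow> diagram set \<Rightarrow> bool" where
  "family sig K \<longleftrightarrow> countable K \<and> (\<forall>A\<in>K. is_structure sig A) \<and>
     (\<forall>A\<in>K. \<forall>B\<in>K. iso A B \<longrightarrow> A = B)"

definition LD :: "nat list \<Rightarrow> diagram set \<Rightarrow> diagram set" where
  "LD sig K = {S. is_structure sig S \<and> (\<exists>A\<in>K. iso S A)}"

definition learnable :: "((nat \<Rightarrow> nat) \<Rightarrow> (nat \<Rightarrow> nat) \<Rightarrow> bool) \<Rightarrow> nat list \<Rightarrow> diagram set \<Rightarrow> bool" where
  "learnable E sig K \<longleftrightarrow>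
     (\<exists>\<Gamma> :: diagram \<Rightarrow> (nat \<Rightarrow> nat). continuous_on (LD sig K) \<Gamma> \<and>
        (\<forall>S\<in>LD sig K. \<forall>S'\<in>LD sig K. iso S S' \<longleftrightarrow> E (\<Gamma> S) (\<Gamma> S')))"

definition E0 :: "(nat \<Rightarrow> nat) \<Rightarrow> (nat \<Rightarrow> nat) \<Rightarrow> bool" where
  "E0 p q \<longleftrightarrow> (\<exists>m. \<forall>n\<ge>m. p n = q n)"

definition Erange :: "(nat \<Rightarrow> nat) \<Rightarrow> (nat \<Rightarrow> nat) \<Rightarrow> bool" where
  "Erange p q \<longleftrightarrow> range p = range q"

text \<open>Linear orders as structures in the signature with one binary relation (the order \<le>).
  omega: the natural numbers; omega_star: the negative integers, with n coding -(n+1).\<close>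
definition order_sig :: "nat list" where "order_sig = [2]"

definition omega :: diagram where
  "omega = (\<lambda>(i, xs). i = 0 \<and> length xs = 2 \<and> xs ! 0 \<le> xs ! 1)"

definition omega_star :: diagram where
  "omega_star = (\<lambda>(i, xs). i = 0 \<and> length xs = 2 \<and>
                    (- int (xs ! 0) - 1) \<le> (- int (xs ! 1) - 1))"

end

theory Submission imports Defs "HOL-Library.Nat_Bijection" begin

definition nbhd :: "('a \<Rightarrow> 'b) \<Rightarrow> 'a set \<Rightarrow> ('a \<Rightarrow> 'b) set" where
  "nbhd x F = {y. \<forall>a\<in>F. y a = x a}"

lemma open_nbhd:
  fixes x :: "'a \<Rightarrow> 'b::discrete_topology"
  assumes "finite F" shows "open (nbhd x F)"
proof -
  have "open {f. \<forall>i\<in>F. f (id i) \<in> (\<lambda>i. {x i}) i}"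
    by (rule product_topology_basis') (auto simp: assms open_discrete)
  then show ?thesis unfolding nbhd_def by simp
qed

lemma open_contains_nbhd:
  fixes x :: "'a \<Rightarrow> 'b::topological_space"
  assumes "open U" "x \<in> U" shows "\<exists>F. finite F \<and> nbhd x F \<subseteq> U"
proof -
  have "openin (product_topology (\<lambda>i. euclidean) UNIV) U"
    using assms unfolding open_fun_def by auto
  from product_topology_open_contains_basis[OF this assms(2)]
  obtain X where H: "x \<in> (\<Pi>\<^sub>E i\<in>UNIV. X i)" "finite {i. X i \<noteq> UNIV}" "(\<Pi>\<^sub>E i\<in>UNIV. X i) \<subseteq> U"
    by auto
  have "nbhd x {i. X i \<noteq> UNIV} \<subseteq> U"
  proof
    fix y assume y: "y \<in> nbhd x {i. X i \<noteq> UNIV}"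
    have "y \<in> (\<Pi>\<^sub>E i\<in>UNIV. X i)"
    proof (auto simp: PiE_def Pi_def)
      fix i show "y i \<in> X i"
        using y H(1) by (cases "X i = UNIV") (auto simp: nbhd_def PiE_def Pi_def)
    qed
    then show "y \<in> U" using H(3) by auto
  qed
  then show ?thesis using H(2) by blast
qed

lemma nat_cont_loc:
  fixes f :: "'a::topological_space \<Rightarrow> nat"
  assumes "continuous_on s f" "x \<in> s"
  shows "\<exists>A. open A \<and> x \<in> A \<and> (\<forall>y\<in>s. y \<in> A \<longrightarrow> f y = f x)"
  using assms unfolding continuous_on_topological
  by (metis open_discrete singletonD singletonI)

lemma loc_cont:
  assumes "\<And>x. x \<in> s \<Longrightarrow> \<exists>A. open A \<and> x \<in> A \<and> (\<forall>y\<in>s. y \<in> A \<longrightarrow> f y = f x)"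
  shows "continuous_on s f"
  unfolding continuous_on_topological
  by (metis assms)

lemma fin_cont:
  fixes G :: "('a \<Rightarrow> 'b::discrete_topology) \<Rightarrow> 'c::topological_space"
  assumes "\<And>x. \<exists>F. finite F \<and> (\<forall>y\<in>nbhd x F. G y = G x)"
  shows "continuous_on s G"
proof (rule loc_cont)
  fix x assume "x \<in> s"
  obtain F where F: "finite F" "\<forall>y\<in>nbhd x F. G y = G x" using assms by blast
  have "x \<in> nbhd x F" unfolding nbhd_def by simp
  then show "\<exists>A. open A \<and> x \<in> A \<and> (\<forall>y\<in>s. y \<in> A \<longrightarrow> G y = G x)"
    using open_nbhd[OF F(1)] F(2) by blast
qed


lemma iso_refl: "iso D D"
  unfolding iso_def by (rule exI[of _ id]) simp

lemma iso_sym: assumes "iso D D'" shows "iso D' D"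
proof -
  obtain f where f: "bij f" "\<And>i xs. D (i, xs) = D' (i, map f xs)" using assms iso_def by blast
  have "D' (i, ys) = D (i, map (inv f) ys)" for i ys
    using f by (simp add: bij_is_surj surj_f_inv_f comp_def)
  then show ?thesis unfolding iso_def using bij_imp_bij_inv[OF f(1)] by blast
qed

lemma iso_trans: assumes "iso D D'" "iso D' D''" shows "iso D D''"
proof -
  obtain f where f: "bij f" "\<And>i xs. D (i, xs) = D' (i, map f xs)" using assms iso_def by blast
  obtain g where g: "bij g" "\<And>i xs. D' (i, xs) = D'' (i, map g xs)" using assms iso_def by blast
  have "D (i, xs) = D'' (i, map (g \<circ> f) xs)" for i xs using f g by simp
  then show ?thesis unfolding iso_def using bij_comp[OF f(1) g(1)] by blast
qed

lemma card_grow: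
  assumes "infinite (B::nat set)" shows "\<exists>m. \<forall>n\<ge>m. card (B \<inter> {..n}) \<ge> k"
proof -
  obtain C where C: "finite C" "card C = k" "C \<subseteq> B" using infinite_arbitrarily_large[OF assms] by blast
  define m where "m = Max (insert 0 C)"
  have "\<forall>n\<ge>m. card (B \<inter> {..n}) \<ge> k"
  proof (intro allI impI)
    fix n assume "m \<le> n"
    have "C \<subseteq> B \<inter> {..n}"
    proof
      fix x assume "x \<in> C"
      then have "x \<le> m" unfolding m_def using C(1) by (simp add: Max_ge)
      then show "x \<in> B \<inter> {..n}" using \<open>x \<in> C\<close> C(3) \<open>m \<le> n\<close> by auto
    qed
    then show "card (B \<inter> {..n}) \<ge> k" using C by (metis card_mono finite_Int finite_atMost)
  qed
  then show ?thesis by blast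
qed

lemma card_cmp:
  assumes "finite (A::nat set)" "infinite B"
  shows "\<exists>m. \<forall>n\<ge>m. card (A \<inter> {..n}) < card (B \<inter> {..n})"
proof -
  obtain m where m: "\<forall>n\<ge>m. card (B \<inter> {..n}) \<ge> Suc (card A)" using card_grow[OF assms(2)] by blast
  have "card (A \<inter> {..n}) \<le> card A" for n by (simp add: assms(1) card_mono)
  then show ?thesis using m by (meson le_imp_less_Suc order_less_le_trans)
qed

definition predc :: "diagram \<Rightarrow> nat \<Rightarrow> nat" where
  "predc S n = card ({x. S (0, [x, 0])} \<inter> {..n})"
definition succc :: "diagram \<Rightarrow> nat \<Rightarrow> nat" where
  "succc S n = card ({x. S (0, [0, x])} \<inter> {..n})"
definition Go :: "diagram \<Rightarrow> nat \<Rightarrow> nat" where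
  "Go S n = (if predc S n < succc S n then 0 else 1)"

lemma fin_le: "bij f \<Longrightarrow> finite {x::nat. f x \<le> (c::nat)}"
proof -
  assume "bij f"
  then have "{x. f x \<le> c} = f -` {..c}" by auto
  then show ?thesis using finite_vimageI[of "{..c}" f] \<open>bij f\<close> bij_is_inj by fastforce
qed

lemma inf_ge: "bij f \<Longrightarrow> infinite {x::nat. (c::nat) \<le> f x}"
proof
  assume "bij f" "finite {x::nat. c \<le> f x}"
  then have "finite (f ` {x::nat. c \<le> f x})" by simp
  moreover have "f ` {x::nat. c \<le> f x} = {c..}" using \<open>bij f\<close>
    by (auto simp: image_iff, metis bij_pointE)
  ultimately show False using infinite_Ici by metis
qed

lemma Go_omega: assumes "iso S omega" shows "\<exists>m. \<forall>n\<ge>m. Go S n = 0"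
proof -
  obtain f where f: "bij f" "\<And>i xs. S (i, xs) = omega (i, map f xs)" using assms iso_def by blast
  have 1: "{x. S (0, [x, 0])} = {x. f x \<le> f 0}" using f by (simp add: omega_def)
  have 2: "{x. S (0, [0, x])} = {x. f 0 \<le> f x}" using f by (simp add: omega_def)
  show ?thesis using card_cmp[OF fin_le[OF f(1), of "f 0"] inf_ge[OF f(1), of "f 0"]]
    unfolding Go_def predc_def succc_def 1 2 by auto
qed

lemma Go_omega_star: assumes "iso S omega_star" shows "\<exists>m. \<forall>n\<ge>m. Go S n = 1"
proof -
  obtain f where f: "bij f" "\<And>i xs. S (i, xs) = omega_star (i, map f xs)" using assms iso_def by blast
  have k: "S (0, [x, y]) = (f y \<le> f x)" for x y using f(2)[of 0 "[x,y]"] unfolding omega_star_def by auto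
  have 1: "{x. S (0, [x, 0])} = {x. f 0 \<le> f x}" using k by auto
  have 2: "{x. S (0, [0, x])} = {x. f x \<le> f 0}" using k by auto
  show ?thesis using card_cmp[OF fin_le[OF f(1), of "f 0"] inf_ge[OF f(1), of "f 0"]]
    unfolding Go_def predc_def succc_def 1 2 by (auto, meson less_not_sym)
qed

lemma ev_E0:
  assumes "\<exists>m. \<forall>n\<ge>m. p n = a" "\<exists>m. \<forall>n\<ge>m. q n = b"
  shows "E0 p q \<longleftrightarrow> a = b"
proof -
  obtain m1 m2 where "\<forall>n\<ge>m1. p n = a" "\<forall>n\<ge>m2. q n = b" using assms by blast
  then show ?thesis unfolding E0_def
    by (metis le_sup_iff max.cobounded1 max.cobounded2 max_def)
qed

lemma not_both: "\<not> (iso S omega \<and> iso S omega_star)"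
proof
  assume "iso S omega \<and> iso S omega_star"
  then obtain m1 m2 where "\<forall>n\<ge>m1. Go S n = 0" "\<forall>n\<ge>m2. Go S n = 1"
    using Go_omega Go_omega_star by blast
  then show False by (metis max.cobounded1 max.cobounded2 zero_neq_one)
qed

lemma Go_cont: "continuous_on X Go"
proof (rule continuous_on_coordinatewise_then_product)
  fix n
  show "continuous_on X (\<lambda>S. Go S n)"
  proof (rule fin_cont)
    fix S :: diagram
    let ?F = "(\<lambda>x. (0::nat, [x, 0])) ` {..n} \<union> (\<lambda>x. (0, [0, x])) ` {..n}"
    have "\<forall>T\<in>nbhd S ?F. Go T n = Go S n"
      unfolding nbhd_def Go_def predc_def succc_def
    proof clarify
      fix T assume H: "\<forall>a\<in>?F. T a = S a"
      have "{x. T (0, [x, 0])} \<inter> {..n} = {x. S (0, [x, 0])} \<inter> {..n}" using H by auto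
      moreover have "{x. T (0, [0, x])} \<inter> {..n} = {x. S (0, [0, x])} \<inter> {..n}" using H by auto
      ultimately show "(if card ({x. T (0, [x, 0])} \<inter> {..n}) < card ({x. T (0, [0, x])} \<inter> {..n}) then 0 else 1) =
         (if card ({x. S (0, [x, 0])} \<inter> {..n}) < card ({x. S (0, [0, x])} \<inter> {..n}) then 0 else 1 :: nat)"
        by simp
    qed
    then show "\<exists>F. finite F \<and> (\<forall>T\<in>nbhd S F. Go T n = Go S n)" by (intro exI[where x="?F"] conjI) auto
  qed
qed


definition rg :: "nat \<Rightarrow> nat \<Rightarrow> nat" where "rg N x = (if x \<le> N then N - x else x)"
definition pull :: "diagram \<Rightarrow> (nat \<Rightarrow> nat) \<Rightarrow> diagram" where
  "pull D g = (\<lambda>(i, xs). D (i, map g xs))"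

lemma rg_bij: "bij (rg N)"
  by (rule involuntory_imp_bij) (simp add: rg_def)

lemma pull_iso: "bij g \<Longrightarrow> iso (pull D g) D"
  unfolding iso_def pull_def by auto

lemma pull_struct: "is_structure sig D \<Longrightarrow> is_structure sig (pull D g)"
  unfolding is_structure_def pull_def by (metis case_prod_conv length_map)

lemma agree1: "set xs \<subseteq> {..N} \<Longrightarrow> pull omega_star (rg N) (i, xs) = omega (i, xs)"
proof -
  assume H: "set xs \<subseteq> {..N}"
  show ?thesis
  proof (cases "length xs = 2")
    case True
    then have "xs ! 0 \<in> set xs" "xs ! 1 \<in> set xs" by simp_all
    then have "xs ! 0 \<le> N" "xs ! 1 \<le> N" using H by auto
    then show ?thesis using True unfolding pull_def omega_star_def omega_def rg_def by auto
  next
    case False then show ?thesis unfolding pull_def omega_star_def omega_def by auto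
  qed
qed

lemma agree2: "set xs \<subseteq> {..N} \<Longrightarrow> pull omega (rg N) (i, xs) = omega_star (i, xs)"
proof -
  assume H: "set xs \<subseteq> {..N}"
  show ?thesis
  proof (cases "length xs = 2")
    case True
    then have "xs ! 0 \<in> set xs" "xs ! 1 \<in> set xs" by simp_all
    then have "xs ! 0 \<le> N" "xs ! 1 \<le> N" using H by auto
    then show ?thesis using True unfolding pull_def omega_star_def omega_def rg_def by auto
  next
    case False then show ?thesis unfolding pull_def omega_star_def omega_def by auto
  qed
qed

lemma bound_F: "finite (F :: (nat \<times> nat list) set) \<Longrightarrow> \<exists>N. \<forall>a\<in>F. set (snd a) \<subseteq> {..N}"
proof -
  assume fin: "finite F"
  define N where "N = Max (insert 0 (\<Union>a\<in>F. set (snd a)))"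
  have "\<forall>a\<in>F. set (snd a) \<subseteq> {..N}"
  proof (intro ballI subsetI)
    fix a x assume "a \<in> F" "x \<in> set (snd a)"
    then show "x \<in> {..N}" unfolding N_def using fin by (auto intro!: Max_ge)
  qed
  then show ?thesis by blast
qed

lemma transfer:
  fixes \<Gamma> :: "('a \<Rightarrow> 'b::topological_space) \<Rightarrow> nat \<Rightarrow> nat"
  assumes cont: "continuous_on L \<Gamma>" and X: "X \<in> L"
    and H: "\<And>F. finite F \<Longrightarrow> \<exists>Y\<in>L. (\<forall>a\<in>F. Y a = X a) \<and> P Y"
  shows "\<exists>Y\<in>L. P Y \<and> \<Gamma> Y m = \<Gamma> X m"
proof -
  obtain A where A: "open A" "X \<in> A" "\<forall>y\<in>L. y \<in> A \<longrightarrow> \<Gamma> y m = \<Gamma> X m"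
    using nat_cont_loc[OF continuous_on_product_then_coordinatewise[OF cont] X] by blast
  obtain F where F: "finite F" "nbhd X F \<subseteq> A" using open_contains_nbhd[OF A(1,2)] by blast
  obtain Y where Y: "Y \<in> L" "\<forall>a\<in>F. Y a = X a" "P Y" using H[OF F(1)] by blast
  have "Y \<in> A" using Y(2) F(2) unfolding nbhd_def by auto
  then show ?thesis using Y A(3) by blast
qed

lemma omega_struct: "is_structure order_sig omega"
  unfolding is_structure_def omega_def order_sig_def by auto
lemma omega_star_struct: "is_structure order_sig omega_star"
  unfolding is_structure_def omega_star_def order_sig_def by auto

lemma not_iso_oo: "\<not> iso omega omega_star"
  using not_both iso_refl by blast

lemma not_Erange: "\<not> learnable Erange order_sig {omega, omega_star}"
proof
  assume "learnable Erange order_sig {omega, omega_star}"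
  then obtain \<Gamma> :: "diagram \<Rightarrow> nat \<Rightarrow> nat" where
    cont: "continuous_on (LD order_sig {omega, omega_star}) \<Gamma>" and
    eq: "\<forall>S\<in>LD order_sig {omega, omega_star}. \<forall>S'\<in>LD order_sig {omega, omega_star}.
           iso S S' \<longleftrightarrow> Erange (\<Gamma> S) (\<Gamma> S')"
    unfolding learnable_def by blast
  let ?L = "LD order_sig {omega, omega_star}"
  have o: "omega \<in> ?L" and os: "omega_star \<in> ?L"
    unfolding LD_def using omega_struct omega_star_struct iso_refl by auto
  have ne: "range (\<Gamma> omega) \<noteq> range (\<Gamma> omega_star)"
    using eq o os not_iso_oo unfolding Erange_def by blast
  have p1: "pull omega_star (rg N) \<in> ?L" for N
    unfolding LD_def using pull_struct[OF omega_star_struct] pull_iso[OF rg_bij] by auto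
  have p2: "pull omega (rg N) \<in> ?L" for N
    unfolding LD_def using pull_struct[OF omega_struct] pull_iso[OF rg_bij] by auto
  show False
  proof (cases "range (\<Gamma> omega) \<subseteq> range (\<Gamma> omega_star)")
    case True
    then obtain v where v: "v \<in> range (\<Gamma> omega_star)" "v \<notin> range (\<Gamma> omega)" using ne by blast
    then obtain m where m: "v = \<Gamma> omega_star m" by blast
    have "\<exists>Y\<in>?L. iso Y omega \<and> \<Gamma> Y m = \<Gamma> omega_star m"
    proof (rule transfer[OF cont os])
      fix F :: "(nat \<times> nat list) set" assume "finite F"
      then obtain N where N: "\<forall>a\<in>F. set (snd a) \<subseteq> {..N}" using bound_F by blast
      have "\<forall>a\<in>F. pull omega (rg N) a = omega_star a" using N agree2 by auto
      then show "\<exists>Y\<in>?L. (\<forall>a\<in>F. Y a = omega_star a) \<and> iso Y omega"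
        using p2 pull_iso[OF rg_bij] by blast
    qed
    then obtain Y where "Y \<in> ?L" "iso Y omega" "\<Gamma> Y m = v" using m by blast
    then have "range (\<Gamma> Y) = range (\<Gamma> omega)" using eq o unfolding Erange_def by blast
    then show False using v \<open>\<Gamma> Y m = v\<close> by (metis rangeI)
  next
    case False
    then obtain v where v: "v \<in> range (\<Gamma> omega)" "v \<notin> range (\<Gamma> omega_star)" by blast
    then obtain m where m: "v = \<Gamma> omega m" by blast
    have "\<exists>Y\<in>?L. iso Y omega_star \<and> \<Gamma> Y m = \<Gamma> omega m"
    proof (rule transfer[OF cont o])
      fix F :: "(nat \<times> nat list) set" assume "finite F"
      then obtain N where N: "\<forall>a\<in>F. set (snd a) \<subseteq> {..N}" using bound_F by blast
      have "\<forall>a\<in>F. pull omega_star (rg N) a = omega a" using N agree1 by auto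
      then show "\<exists>Y\<in>?L. (\<forall>a\<in>F. Y a = omega a) \<and> iso Y omega_star"
        using p1 pull_iso[OF rg_bij] by blast
    qed
    then obtain Y where "Y \<in> ?L" "iso Y omega_star" "\<Gamma> Y m = v" using m by blast
    then have "range (\<Gamma> Y) = range (\<Gamma> omega_star)" using eq os unfolding Erange_def by blast
    then show False using v \<open>\<Gamma> Y m = v\<close> by (metis rangeI)
  qed
qed

lemma E0_learn: "learnable E0 order_sig {omega, omega_star}"
  unfolding learnable_def
proof (intro exI conjI)
  show "continuous_on (LD order_sig {omega, omega_star}) Go" by (rule Go_cont)
  show "\<forall>S\<in>LD order_sig {omega, omega_star}. \<forall>S'\<in>LD order_sig {omega, omega_star}.
          iso S S' \<longleftrightarrow> E0 (Go S) (Go S')"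
  proof (intro ballI)
    fix S S' assume S: "S \<in> LD order_sig {omega, omega_star}" and S': "S' \<in> LD order_sig {omega, omega_star}"
    have cS: "iso S omega \<or> iso S omega_star" using S unfolding LD_def by auto
    have cS': "iso S' omega \<or> iso S' omega_star" using S' unfolding LD_def by auto
    show "iso S S' \<longleftrightarrow> E0 (Go S) (Go S')"
    proof (cases "iso S omega")
      case T1: True
      note e1 = ev_E0[OF Go_omega[OF T1]]
      show ?thesis
      proof (cases "iso S' omega")
        case True
        then show ?thesis using e1[OF Go_omega[OF True]] T1 iso_sym iso_trans by blast
      next
        case False
        then have "iso S' omega_star" using cS' by blast
        have "\<not> iso S S'"
        proof
          assume "iso S S'"
          then have "iso S' omega" using iso_trans[OF iso_sym[OF \<open>iso S S'\<close>] T1] by simp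
          then show False using False by simp
        qed
        then show ?thesis using e1[OF Go_omega_star[OF \<open>iso S' omega_star\<close>]] by simp
      qed
    next
      case F1: False
      then have T1: "iso S omega_star" using cS by blast
      note e1 = ev_E0[OF Go_omega_star[OF T1]]
      show ?thesis
      proof (cases "iso S' omega")
        case True
        have "\<not> iso S S'"
        proof
          assume "iso S S'"
          then have "iso S omega" using iso_trans[OF \<open>iso S S'\<close> True] by simp
          then show False using F1 by simp
        qed
        then show ?thesis using e1[OF Go_omega[OF True]] by simp
      next
        case False
        then have "iso S' omega_star" using cS' by blast
        then show ?thesis using e1[OF Go_omega_star] T1 iso_sym iso_trans by blast
      qed
    qed
  qed
qed


lemma sep_N:
  assumes "finite (Rs :: nat set set)"
  shows "\<exists>N. \<forall>R\<in>Rs. \<forall>R'\<in>Rs. R \<inter> {..N} = R' \<inter> {..N} \<longrightarrow> R = R'"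
proof -
  define P where "P = {p \<in> Rs \<times> Rs. fst p \<noteq> snd p}"
  define w where "w p = (SOME v. (v \<in> fst p) \<noteq> (v \<in> snd p))" for p :: "nat set \<times> nat set"
  define N where "N = Max (insert 0 (w ` P))"
  have fP: "finite P" unfolding P_def by (rule finite_subset[of _ "Rs \<times> Rs"]) (auto simp: assms)
  have "\<forall>R\<in>Rs. \<forall>R'\<in>Rs. R \<inter> {..N} = R' \<inter> {..N} \<longrightarrow> R = R'"
  proof (intro ballI impI, rule ccontr)
    fix R R' assume R: "R \<in> Rs" "R' \<in> Rs" "R \<inter> {..N} = R' \<inter> {..N}" "R \<noteq> R'"
    then have "(R, R') \<in> P" unfolding P_def by auto
    then have "w (R, R') \<in> insert 0 (w ` P)" by blast
    then have le: "w (R, R') \<le> N" unfolding N_def using fP by (intro Max_ge) auto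
    have "\<exists>v. (v \<in> R) \<noteq> (v \<in> R')" using R(4) by blast
    then have "(w (R, R') \<in> R) \<noteq> (w (R, R') \<in> R')" unfolding w_def fst_conv snd_conv by (rule someI_ex)
    moreover have "(w (R, R') \<in> R \<inter> {..N}) = (w (R, R') \<in> R' \<inter> {..N})" using R(3) by simp
    ultimately show False using le by simp
  qed
  then show ?thesis by blast
qed

lemma stab: "\<exists>M. \<forall>n\<ge>M. (p :: nat \<Rightarrow> nat) ` {..n} \<inter> {..N} = range p \<inter> {..N}"
proof -
  define T where "T = range p \<inter> {..N}"
  define idx where "idx v = (SOME k. p k = v)" for v
  define M where "M = Max (insert 0 (idx ` T))"
  have "\<forall>n\<ge>M. p ` {..n} \<inter> {..N} = T"
  proof (intro allI impI)
    fix n assume "M \<le> n"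
    show "p ` {..n} \<inter> {..N} = T"
    proof
      show "p ` {..n} \<inter> {..N} \<subseteq> T" unfolding T_def by auto
      show "T \<subseteq> p ` {..n} \<inter> {..N}"
      proof
        fix v assume v: "v \<in> T"
        then have pv: "p (idx v) = v" unfolding T_def idx_def by (auto intro: someI)
        have "idx v \<le> M" unfolding M_def using v by (auto simp: T_def intro!: Max_ge)
        then have "idx v \<in> {..n}" using \<open>M \<le> n\<close> by simp
        then have "v \<in> p ` {..n}" using pv by (metis image_eqI)
        moreover have "v \<in> {..N}" using v unfolding T_def by simp
        ultimately show "v \<in> p ` {..n} \<inter> {..N}" by (rule IntI)
      qed
    qed
  qed
  then show ?thesis unfolding T_def by blast
qed

lemma part1:
  assumes fin: "finite K" and fam: "family sig K" and lr: "learnable Erange sig K"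
  shows "learnable E0 sig K"
proof -
  obtain \<Gamma> :: "diagram \<Rightarrow> nat \<Rightarrow> nat" where
    cont: "continuous_on (LD sig K) \<Gamma>" and
    eq: "\<forall>S\<in>LD sig K. \<forall>S'\<in>LD sig K. iso S S' \<longleftrightarrow> Erange (\<Gamma> S) (\<Gamma> S')"
    using lr unfolding learnable_def by blast
  let ?L = "LD sig K"
  define Rs where "Rs = (\<lambda>A. range (\<Gamma> A)) ` K"
  obtain N where N: "\<forall>R\<in>Rs. \<forall>R'\<in>Rs. R \<inter> {..N} = R' \<inter> {..N} \<longrightarrow> R = R'"
    using sep_N[of Rs] fin unfolding Rs_def by blast
  define G where "G S n = set_encode (\<Gamma> S ` {..n} \<inter> {..N})" for S n
  have KL: "A \<in> ?L" if "A \<in> K" for A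
  proof -
    have "is_structure sig A" using that fam unfolding family_def by blast
    then show ?thesis unfolding LD_def using that iso_refl by blast
  qed
  have inRs: "range (\<Gamma> S) \<in> Rs" if SL: "S \<in> ?L" for S
  proof -
    obtain A where A: "A \<in> K" "iso S A" using SL unfolding LD_def by blast
    have "Erange (\<Gamma> S) (\<Gamma> A)" using eq SL KL[OF A(1)] A(2) by blast
    then have "range (\<Gamma> S) = range (\<Gamma> A)" unfolding Erange_def .
    then show ?thesis unfolding Rs_def using A by blast
  qed
  have ev: "\<exists>M. \<forall>n\<ge>M. G S n = set_encode (range (\<Gamma> S) \<inter> {..N})" for S
  proof -
    obtain M where "\<forall>n\<ge>M. \<Gamma> S ` {..n} \<inter> {..N} = range (\<Gamma> S) \<inter> {..N}" using stab[of "\<Gamma> S" N] by blast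
    then show ?thesis unfolding G_def by (intro exI[of _ M]) simp
  qed
  have contG: "continuous_on ?L G"
  proof (rule continuous_on_coordinatewise_then_product)
    fix n
    show "continuous_on ?L (\<lambda>S. G S n)"
    proof (rule loc_cont)
      fix S assume S: "S \<in> ?L"
      have "\<forall>m\<in>{..n}. \<exists>A. open A \<and> S \<in> A \<and> (\<forall>y\<in>?L. y \<in> A \<longrightarrow> \<Gamma> y m = \<Gamma> S m)"
        using nat_cont_loc[OF continuous_on_product_then_coordinatewise[OF cont] S] by blast
      from bchoice[OF this] obtain A where A: "\<forall>m\<in>{..n}. open (A m) \<and> S \<in> A m \<and> (\<forall>y\<in>?L. y \<in> A m \<longrightarrow> \<Gamma> y m = \<Gamma> S m)"
        by blast
      have "open (\<Inter>m\<in>{..n}. A m)" using A by (intro open_INT) auto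
      moreover have "S \<in> (\<Inter>m\<in>{..n}. A m)" using A by auto
      moreover have "\<forall>y\<in>?L. y \<in> (\<Inter>m\<in>{..n}. A m) \<longrightarrow> G y n = G S n"
      proof (intro ballI impI)
        fix y assume "y \<in> ?L" "y \<in> (\<Inter>m\<in>{..n}. A m)"
        then have "\<Gamma> y ` {..n} = \<Gamma> S ` {..n}" by (intro image_cong) (use A in auto)
        then show "G y n = G S n" unfolding G_def by simp
      qed
      ultimately show "\<exists>A. open A \<and> S \<in> A \<and> (\<forall>y\<in>?L. y \<in> A \<longrightarrow> G y n = G S n)" by blast
    qed
  qed
  have "\<forall>S\<in>?L. \<forall>S'\<in>?L. iso S S' \<longleftrightarrow> E0 (G S) (G S')"
  proof (intro ballI)
    fix S S' assume S: "S \<in> ?L" and S': "S' \<in> ?L"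
    have "E0 (G S) (G S') \<longleftrightarrow> set_encode (range (\<Gamma> S) \<inter> {..N}) = set_encode (range (\<Gamma> S') \<inter> {..N})"
      by (rule ev_E0[OF ev ev])
    also have "\<dots> \<longleftrightarrow> range (\<Gamma> S) \<inter> {..N} = range (\<Gamma> S') \<inter> {..N}"
      by (rule set_encode_eq) auto
    also have "\<dots> \<longleftrightarrow> range (\<Gamma> S) = range (\<Gamma> S')"
      using bspec[OF bspec[OF N inRs[OF S]] inRs[OF S']] by auto
    also have "\<dots> \<longleftrightarrow> iso S S'" using eq S S' unfolding Erange_def by blast
    finally show "iso S S' \<longleftrightarrow> E0 (G S) (G S')" by simp
  qed
  then show ?thesis unfolding learnable_def using contG by blast
qed

theorem mainTheorem7:
  shows "(\<forall>(sig :: nat list) (K :: diagram set).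
            finite K \<and> family sig K \<and> learnable Erange sig K \<longrightarrow> learnable E0 sig K)
       \<and> (finite {omega, omega_star} \<and> family order_sig {omega, omega_star}
          \<and> learnable E0 order_sig {omega, omega_star}
          \<and> \<not> learnable Erange order_sig {omega, omega_star})"
proof (intro conjI allI impI)
  fix sig K assume "finite K \<and> family sig (K :: diagram set) \<and> learnable Erange sig K"
  then show "learnable E0 sig K" using part1 by blast
next
  show "finite {omega, omega_star}" by simp
next
  show "family order_sig {omega, omega_star}"
  proof -
    have "\<not> iso omega_star omega" using not_iso_oo iso_sym by blast
    then show ?thesis unfolding family_def using omega_struct omega_star_struct not_iso_oo
      by (auto intro: countable_finite)
  qed
next
  show "learnable E0 order_sig {omega, omega_star}" by (rule E0_learn)
next
  show "\<not> learnable Erange order_sig {omega, omega_star}" by (rule not_Erange)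
qed

end
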